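(* Let $\mathcal{A}$ be a finite abelian group and let $\mu$ be the stationary Markov measure on $\mathcal{A}^{\mathbb{Z}}$ with transition matrix $Q=(q^a_b)_{a,b\in\mathcal{A}}$ (where $q^a_b=\Pr[c_1=b\mid c_0=a]$) and stationary probability vector $\nu=(\nu_a)_{a\in\mathcal{A}}$ (with $\nu_a=\Pr[c_0=a]$). If all entries $q^a_b$ are nonzero, then $\mu$ is harmonically mixing.
   Context: Characters of $\mathcal{A}^{\mathbb{Z}}$ are $\chi=\bigotimes_{n\in\mathbb{Z}}\chi_n$ with $\chi_n$ characters of $\mathcal{A}$, all but finitely many trivial; rank$(\chi)$ is the number of nontrivial $\chi_n$. A measure $\mu$ is harmonically mixing if for every $\varepsilon>0$ there is $R$ such that rank$(\chi)>R$ implies $|\int\chi\,d\mu|<\varepsilon$. *)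

theory Defs
  imports "HOL-Probability.Probability"
begin

definition is_character :: "('a::ab_group_add \<Rightarrow> complex) \<Rightarrow> bool" where
  "is_character ch \<longleftrightarrow> (\<forall>a b. ch (a + b) = ch a * ch b) \<and> (\<forall>a. ch a \<noteq> 0)"

text \<open>A character of A^Z is given by a family of characters chi_n, all but finitely
  many trivial. Its support is the set of n with chi_n nontrivial.\<close>
definition char_support :: "(int \<Rightarrow> 'a \<Rightarrow> complex) \<Rightarrow> int set" where
  "char_support X = {n. X n \<noteq> (\<lambda>_. 1)}"

definition is_seq_character :: "(int \<Rightarrow> ('a::ab_group_add) \<Rightarrow> complex) \<Rightarrow> bool" where
  "is_seq_character X \<longleftrightarrow> (\<forall>n. is_character (X n)) \<and> finite (char_support X)"

definition char_rank :: "(int \<Rightarrow> 'a \<Rightarrow> complex) \<Rightarrow> nat" where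
  "char_rank X = card (char_support X)"

definition seq_char_fun :: "(int \<Rightarrow> 'a \<Rightarrow> complex) \<Rightarrow> (int \<Rightarrow> 'a) \<Rightarrow> complex" where
  "seq_char_fun X c = (\<Prod>n\<in>char_support X. X n (c n))"

definition shift_space :: "(int \<Rightarrow> 'a) measure" where
  "shift_space = PiM UNIV (\<lambda>_. count_space UNIV)"

definition harmonically_mixing :: "(int \<Rightarrow> ('a::ab_group_add)) measure \<Rightarrow> bool" where
  "harmonically_mixing \<mu> \<longleftrightarrow>
     (\<forall>\<epsilon>>0. \<exists>R::nat. \<forall>X. is_seq_character X \<and> char_rank X > R \<longrightarrow>
        cmod (integral\<^sup>L \<mu> (seq_char_fun X)) < \<epsilon>)"

text \<open>Q is a stochastic matrix (Q a b = Pr[c_1 = b | c_0 = a]) and nu a stationary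
  probability vector for it.\<close>
definition stochastic_matrix :: "('a::finite \<Rightarrow> 'a \<Rightarrow> real) \<Rightarrow> bool" where
  "stochastic_matrix Q \<longleftrightarrow> (\<forall>a b. Q a b \<ge> 0) \<and> (\<forall>a. (\<Sum>b\<in>UNIV. Q a b) = 1)"

definition stationary_vector :: "('a::finite \<Rightarrow> 'a \<Rightarrow> real) \<Rightarrow> ('a \<Rightarrow> real) \<Rightarrow> bool" where
  "stationary_vector Q \<nu> \<longleftrightarrow> (\<forall>a. \<nu> a \<ge> 0) \<and> (\<Sum>a\<in>UNIV. \<nu> a) = 1 \<and>
     (\<forall>b. (\<Sum>a\<in>UNIV. \<nu> a * Q a b) = \<nu> b)"

definition stationary_markov_measure ::
    "('a::finite \<Rightarrow> 'a \<Rightarrow> real) \<Rightarrow> ('a \<Rightarrow> real) \<Rightarrow> (int \<Rightarrow> 'a) measure \<Rightarrow> bool" where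
  "stationary_markov_measure Q \<nu> \<mu> \<longleftrightarrow>
     stochastic_matrix Q \<and> stationary_vector Q \<nu> \<and>
     prob_space \<mu> \<and> sets \<mu> = sets shift_space \<and>
     (\<forall>(m::int) (n::nat) (w::nat \<Rightarrow> 'a).
        measure \<mu> {c \<in> space \<mu>. \<forall>i\<le>n. c (m + int i) = w i}
          = \<nu> (w 0) * (\<Prod>i<n. Q (w i) (w (Suc i))))"

end

theory Submission
  imports Defs
begin


lemma char_zero:
  assumes "is_character (ch::'a::ab_group_add \<Rightarrow> complex)"
  shows "ch 0 = 1"
proof -
  have "ch 0 = ch 0 * ch 0" using assms unfolding is_character_def by (metis add_0)
  moreover have "ch 0 \<noteq> 0" using assms unfolding is_character_def by blast
  ultimately show ?thesis by (metis mult_cancel_left1)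
qed

lemma char_norm_le:
  assumes "is_character (ch::'a::{finite,ab_group_add} \<Rightarrow> complex)"
  shows "cmod (ch b) \<le> 1"
proof -
  define M where "M = Max (range (\<lambda>b. cmod (ch b)))"
  have fin: "finite (range (\<lambda>b. cmod (ch b)))" by simp
  have le: "cmod (ch x) \<le> M" for x unfolding M_def using fin by (intro Max_ge) auto
  have "M \<in> range (\<lambda>b. cmod (ch b))" unfolding M_def by (rule Max_in[OF fin]) auto
  then obtain b0 where b0: "cmod (ch b0) = M" by auto
  have "cmod (ch (b0 + b0)) = M * M" using assms b0 unfolding is_character_def by (simp add: norm_mult)
  hence "M * M \<le> M" using le by metis
  moreover have "M \<ge> 1" using le[of 0] char_zero[OF assms] by simp
  ultimately have "M * M \<le> M * 1" "M > 0" by simp_all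
  hence "M \<le> 1" using mult_le_cancel_left_pos[of M M 1] by simp
  thus ?thesis using le[of b] by linarith
qed

lemma char_sum_zero:
  assumes "is_character (ch::'a::{finite,ab_group_add} \<Rightarrow> complex)" "ch \<noteq> (\<lambda>_. 1)"
  shows "(\<Sum>b\<in>UNIV. ch b) = 0"
proof -
  obtain b0 where b0: "ch b0 \<noteq> 1" using assms(2) by auto
  have "(\<Sum>b\<in>UNIV. ch b) = (\<Sum>b\<in>UNIV. ch (b0 + b))"
    by (rule sum.reindex_bij_witness[where j="\<lambda>b. b - b0" and i="\<lambda>b. b0 + b"]) auto
  also have "\<dots> = ch b0 * (\<Sum>b\<in>UNIV. ch b)"
    using assms(1) unfolding is_character_def by (simp add: sum_distrib_left)
  finally have "(1 - ch b0) * (\<Sum>b\<in>UNIV. ch b) = 0" by (simp add: algebra_simps)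
  thus ?thesis using b0 by simp
qed

definition qstep :: "('a \<Rightarrow> 'a \<Rightarrow> real) \<Rightarrow> ('a \<Rightarrow> complex) \<Rightarrow> ('a \<Rightarrow> complex) \<Rightarrow> 'a \<Rightarrow> complex" where
  "qstep Q \<phi> r b = \<phi> b * (\<Sum>a\<in>UNIV. r a * of_real (Q a b))"

definition nrm :: "('a \<Rightarrow> complex) \<Rightarrow> real" where
  "nrm r = (\<Sum>a\<in>UNIV. cmod (r a))"

lemma nrm_ge0: "nrm r \<ge> 0" unfolding nrm_def by (simp add: sum_nonneg)

lemma Qapply_le:
  fixes Q :: "'a::finite \<Rightarrow> 'a \<Rightarrow> real"
  assumes "stochastic_matrix Q"
  shows "(\<Sum>b\<in>UNIV. cmod (\<Sum>a\<in>UNIV. r a * of_real (Q a b))) \<le> nrm r"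
proof -
  have "(\<Sum>b\<in>UNIV. cmod (\<Sum>a\<in>UNIV. r a * of_real (Q a b))) \<le> (\<Sum>b\<in>UNIV. \<Sum>a\<in>UNIV. cmod (r a) * Q a b)"
    apply (intro sum_mono)
    apply (rule order_trans[OF norm_sum])
    using assms unfolding stochastic_matrix_def by (simp add: norm_mult)
  also have "\<dots> = (\<Sum>a\<in>UNIV. cmod (r a) * (\<Sum>b\<in>UNIV. Q a b))"
    by (subst sum.swap) (simp add: sum_distrib_left)
  also have "\<dots> = nrm r" using assms unfolding stochastic_matrix_def nrm_def by simp
  finally show ?thesis .
qed

lemma qstep_le:
  fixes Q :: "'a::finite \<Rightarrow> 'a \<Rightarrow> real"
  assumes "stochastic_matrix Q" "\<And>b. cmod (\<phi> b) \<le> 1"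
  shows "nrm (qstep Q \<phi> r) \<le> nrm r"
proof -
  have "nrm (qstep Q \<phi> r) \<le> (\<Sum>b\<in>UNIV. cmod (\<Sum>a\<in>UNIV. r a * of_real (Q a b)))"
    unfolding nrm_def qstep_def norm_mult
    by (intro sum_mono mult_left_le_one_le) (auto simp: assms(2))
  also have "\<dots> \<le> nrm r" by (rule Qapply_le[OF assms(1)])
  finally show ?thesis .
qed

lemma qstep_contract:
  fixes Q :: "'a::{finite,ab_group_add} \<Rightarrow> 'a \<Rightarrow> real"
  assumes st: "stochastic_matrix Q" and dl: "\<And>a b. \<delta> \<le> Q a b" and d0: "0 \<le> \<delta>"
    and ch: "is_character ch" "ch \<noteq> (\<lambda>_. 1)" and ph: "\<And>b. cmod (\<phi> b) \<le> 1"
  shows "nrm (qstep Q \<phi> (qstep Q ch r)) \<le> (1 - (real CARD('a) * \<delta>)^2) * nrm r"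
proof -
  define N where "N = real CARD('a)"
  define s where "s = qstep Q ch r"
  define R where "R a b = Q a b - \<delta>" for a b
  have R0: "R a b \<ge> 0" for a b using dl unfolding R_def by simp
  have Rs: "(\<Sum>b\<in>UNIV. R a b) = 1 - N * \<delta>" for a
    using st unfolding R_def stochastic_matrix_def N_def by (simp add: sum_subtractf)
  have Nd: "1 - N * \<delta> \<ge> 0" using Rs[of undefined] R0 by (metis sum_nonneg)
  have chn: "cmod (ch b) \<le> 1" for b by (rule char_norm_le[OF ch(1)])
  define T where "T = (\<Sum>b\<in>UNIV. s b)"
  have "T = (\<Sum>b\<in>UNIV. \<Sum>a\<in>UNIV. r a * (ch b * of_real (Q a b)))"
    unfolding T_def s_def qstep_def by (simp add: sum_distrib_left algebra_simps)
  also have "\<dots> = (\<Sum>a\<in>UNIV. r a * (\<Sum>b\<in>UNIV. ch b * of_real (Q a b)))"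
    by (subst sum.swap) (simp add: sum_distrib_left)
  also have "\<dots> = (\<Sum>a\<in>UNIV. r a * (\<Sum>b\<in>UNIV. ch b * of_real (R a b)))"
  proof -
    have inner: "(\<Sum>b\<in>UNIV. ch b * of_real (Q a b)) = (\<Sum>b\<in>UNIV. ch b * of_real (R a b))" for a
    proof -
      have "(\<Sum>b\<in>UNIV. ch b * of_real (Q a b)) = (\<Sum>b\<in>UNIV. ch b * of_real \<delta> + ch b * of_real (R a b))"
        unfolding R_def by (intro sum.cong) (auto simp: algebra_simps)
      also have "\<dots> = (\<Sum>b\<in>UNIV. ch b) * of_real \<delta> + (\<Sum>b\<in>UNIV. ch b * of_real (R a b))"
        by (simp add: sum.distrib sum_distrib_right)
      finally show ?thesis
        using char_sum_zero[OF ch] by simp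
    qed
    show ?thesis by (simp add: inner)
  qed
  finally have Teq: "T = \<dots>" .
  have Tle: "cmod T \<le> (1 - N * \<delta>) * nrm r"
  proof -
    have inn: "cmod (\<Sum>b\<in>UNIV. ch b * of_real (R a b)) \<le> (\<Sum>b\<in>UNIV. R a b)" for a
    proof -
      have "cmod (\<Sum>b\<in>UNIV. ch b * of_real (R a b)) \<le> (\<Sum>b\<in>UNIV. cmod (ch b * of_real (R a b)))"
        by (rule norm_sum)
      also have "\<dots> \<le> (\<Sum>b\<in>UNIV. R a b)"
      proof (rule sum_mono)
        fix b
        have "cmod (ch b * of_real (R a b)) = cmod (ch b) * R a b" using R0[of a b] by (simp add: norm_mult)
        also have "\<dots> \<le> R a b" using chn[of b] R0[of a b] by (simp add: mult_left_le_one_le)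
        finally show "cmod (ch b * of_real (R a b)) \<le> R a b" .
      qed
      finally show ?thesis .
    qed
    have "cmod T \<le> (\<Sum>a\<in>UNIV. cmod (r a * (\<Sum>b\<in>UNIV. ch b * of_real (R a b))))"
      unfolding Teq by (rule norm_sum)
    also have "\<dots> \<le> (\<Sum>a\<in>UNIV. cmod (r a) * (\<Sum>b\<in>UNIV. R a b))"
      unfolding norm_mult by (intro sum_mono mult_left_mono inn norm_ge_zero)
    also have "\<dots> = (1 - N * \<delta>) * nrm r" unfolding Rs nrm_def by (simp add: sum_distrib_left algebra_simps)
    finally show ?thesis .
  qed
  have ns: "nrm s \<le> nrm r" unfolding s_def by (rule qstep_le[OF st chn])
  have "nrm (qstep Q \<phi> s) \<le> (\<Sum>c\<in>UNIV. cmod (\<Sum>b\<in>UNIV. s b * of_real (Q b c)))"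
    unfolding nrm_def qstep_def norm_mult
    by (intro sum_mono mult_left_le_one_le) (auto simp: ph)
  also have "\<dots> = (\<Sum>c\<in>UNIV. cmod (of_real \<delta> * T + (\<Sum>b\<in>UNIV. s b * of_real (R b c))))"
  proof -
    have e: "s b * of_real (Q b c) = of_real \<delta> * s b + s b * of_real (R b c)" for b c
      unfolding R_def of_real_diff by (simp add: algebra_simps)
    show ?thesis unfolding e sum.distrib T_def sum_distrib_left by simp
  qed
  also have "\<dots> \<le> (\<Sum>c\<in>UNIV. \<delta> * cmod T + (\<Sum>b\<in>UNIV. cmod (s b) * R b c))"
  proof (intro sum_mono)
    fix c
    have "cmod (of_real \<delta> * T + (\<Sum>b\<in>UNIV. s b * of_real (R b c))) \<le> cmod (of_real \<delta> * T) + cmod (\<Sum>b\<in>UNIV. s b * of_real (R b c))"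
      by (rule norm_triangle_ineq)
    also have "\<dots> \<le> \<delta> * cmod T + (\<Sum>b\<in>UNIV. cmod (s b) * R b c)"
      apply (intro add_mono)
       apply (simp add: norm_mult d0)
      apply (rule order_trans[OF norm_sum])
      using R0 by (simp add: norm_mult)
    finally show "cmod (of_real \<delta> * T + (\<Sum>b\<in>UNIV. s b * of_real (R b c))) \<le> \<delta> * cmod T + (\<Sum>b\<in>UNIV. cmod (s b) * R b c)" .
  qed
  also have "\<dots> = N * \<delta> * cmod T + (\<Sum>b\<in>UNIV. cmod (s b) * (\<Sum>c\<in>UNIV. R b c))"
  proof -
    have "(\<Sum>c\<in>UNIV. \<delta> * cmod T + (\<Sum>b\<in>UNIV. cmod (s b) * R b c)) = (\<Sum>c\<in>(UNIV::'a set). \<delta> * cmod T) + (\<Sum>c\<in>UNIV. \<Sum>b\<in>UNIV. cmod (s b) * R b c)"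
      by (rule sum.distrib)
    also have "(\<Sum>c\<in>(UNIV::'a set). \<delta> * cmod T) = N * \<delta> * cmod T" unfolding N_def by simp
    also have "(\<Sum>c\<in>UNIV. \<Sum>b\<in>UNIV. cmod (s b) * R b c) = (\<Sum>b\<in>UNIV. cmod (s b) * (\<Sum>c\<in>UNIV. R b c))"
      by (subst sum.swap) (simp add: sum_distrib_left)
    finally show ?thesis .
  qed
  also have "\<dots> = N * \<delta> * cmod T + (1 - N * \<delta>) * nrm s"
    unfolding Rs nrm_def by (simp add: sum_distrib_left algebra_simps)
  also have "\<dots> \<le> N * \<delta> * ((1 - N * \<delta>) * nrm r) + (1 - N * \<delta>) * nrm r"
    apply (intro add_mono mult_left_mono Tle ns Nd)
    using d0 unfolding N_def by auto
  also have "\<dots> = (1 - (N * \<delta>)^2) * nrm r" by (simp add: algebra_simps power2_eq_square)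
  finally show ?thesis unfolding s_def N_def .
qed



fun Fv :: "('a \<Rightarrow> 'a \<Rightarrow> real) \<Rightarrow> ('a \<Rightarrow> real) \<Rightarrow> (nat \<Rightarrow> 'a \<Rightarrow> complex) \<Rightarrow> nat \<Rightarrow> 'a \<Rightarrow> complex" where
  "Fv Q \<nu> \<phi> 0 = (\<lambda>b. of_real (\<nu> b) * \<phi> 0 b)"
| "Fv Q \<nu> \<phi> (Suc n) = qstep Q (\<phi> (Suc n)) (Fv Q \<nu> \<phi> n)"

definition Tw :: "('a \<Rightarrow> 'a \<Rightarrow> real) \<Rightarrow> ('a \<Rightarrow> real) \<Rightarrow> (nat \<Rightarrow> 'a \<Rightarrow> complex) \<Rightarrow> nat \<Rightarrow> (nat \<Rightarrow> 'a) \<Rightarrow> complex" where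
  "Tw Q \<nu> \<phi> n w = of_real (\<nu> (w 0) * (\<Prod>i<n. Q (w i) (w (Suc i)))) * (\<Prod>i\<le>n. \<phi> i (w i))"

lemma Tw_upd:
  "Tw Q \<nu> \<phi> (Suc n) (g(Suc n := b)) = Tw Q \<nu> \<phi> n g * of_real (Q (g n) b) * \<phi> (Suc n) b"
proof -
  have 1: "(\<Prod>i<n. Q ((g(Suc n := b)) i) ((g(Suc n := b)) (Suc i))) = (\<Prod>i<n. Q (g i) (g (Suc i)))"
    by (intro prod.cong) auto
  have 2: "(\<Prod>i\<le>n. \<phi> i ((g(Suc n := b)) i)) = (\<Prod>i\<le>n. \<phi> i (g i))"
    by (intro prod.cong) auto
  show ?thesis unfolding Tw_def using 1 2 by (simp add: algebra_simps)
qed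

lemma sum_if_delta:
  fixes f :: "'a::finite \<Rightarrow> 'b::comm_ring_1"
  shows "(\<Sum>a\<in>UNIV. (if c = a then t else 0) * f a) = t * f c"
proof -
  have "(\<Sum>a\<in>UNIV. (if c = a then t else 0) * f a) = (\<Sum>a\<in>UNIV. if c = a then t * f a else 0)"
    by (intro sum.cong) auto
  thus ?thesis by simp
qed

lemma PiE_Suc_sum:
  fixes H :: "(nat \<Rightarrow> 'a::finite) \<Rightarrow> 'b::comm_monoid_add"
  shows "(\<Sum>w\<in>PiE {..Suc n} (\<lambda>_. UNIV). H w) = (\<Sum>g\<in>PiE {..n} (\<lambda>_. UNIV). \<Sum>b\<in>UNIV. H (g(Suc n := b)))"
proof -
  have eq: "{..Suc n} = insert (Suc n) {..n}" by auto
  have inj: "inj_on (\<lambda>(y, g). g(Suc n := y)) (UNIV \<times> PiE {..n} (\<lambda>_. (UNIV::'a set)))"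
    by (rule inj_combinator) auto
  have "(\<Sum>w\<in>PiE {..Suc n} (\<lambda>_. UNIV). H w) = (\<Sum>p\<in>UNIV \<times> PiE {..n} (\<lambda>_. (UNIV::'a set)). H ((\<lambda>(y, g). g(Suc n := y)) p))"
    unfolding eq PiE_insert_eq by (subst sum.reindex[OF inj]) simp
  also have "\<dots> = (\<Sum>b\<in>UNIV. \<Sum>g\<in>PiE {..n} (\<lambda>_. UNIV). H (g(Suc n := b)))"
    by (subst sum.cartesian_product) (simp add: case_prod_unfold)
  also have "\<dots> = (\<Sum>g\<in>PiE {..n} (\<lambda>_. UNIV). \<Sum>b\<in>UNIV. H (g(Suc n := b)))"
    by (rule sum.swap)
  finally show ?thesis .
qed

lemma Fv_eq:
  fixes Q :: "'a::finite \<Rightarrow> 'a \<Rightarrow> real"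
  shows "Fv Q \<nu> \<phi> n b = (\<Sum>w\<in>PiE {..n} (\<lambda>_. UNIV). if w n = b then Tw Q \<nu> \<phi> n w else 0)"
proof (induction n arbitrary: b)
  case 0
  have "PiE {..0::nat} (\<lambda>_. UNIV::'a set) = (\<lambda>a. (\<lambda>_. undefined)(0 := a)) ` UNIV"
    using PiE_insert_eq[of "0::nat" "{}" "\<lambda>_. UNIV::'a set"] by (auto simp: atMost_0)
  moreover have "inj (\<lambda>a::'a. (\<lambda>_::nat. undefined :: 'a)(0 := a))"
    by (auto simp: inj_on_def fun_eq_iff)
  ultimately have "(\<Sum>w\<in>PiE {..0} (\<lambda>_. UNIV). if w 0 = b then Tw Q \<nu> \<phi> 0 w else 0)
      = (\<Sum>a\<in>UNIV. if a = b then Tw Q \<nu> \<phi> 0 ((\<lambda>_. undefined)(0 := a)) else 0)"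
    by (simp add: sum.reindex)
  also have "\<dots> = Tw Q \<nu> \<phi> 0 ((\<lambda>_. undefined)(0 := b))" by simp
  also have "\<dots> = Fv Q \<nu> \<phi> 0 b" by (simp add: Tw_def)
  finally show ?case by simp
next
  case (Suc n)
  have "(\<Sum>w\<in>PiE {..Suc n} (\<lambda>_. UNIV). if w (Suc n) = b then Tw Q \<nu> \<phi> (Suc n) w else 0)
     = (\<Sum>g\<in>PiE {..n} (\<lambda>_. UNIV). \<Sum>c\<in>UNIV. if c = b then Tw Q \<nu> \<phi> (Suc n) (g(Suc n := c)) else 0)"
    by (subst PiE_Suc_sum) simp
  also have "\<dots> = (\<Sum>g\<in>PiE {..n} (\<lambda>_. UNIV). Tw Q \<nu> \<phi> n g * of_real (Q (g n) b) * \<phi> (Suc n) b)"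
    by (simp add: Tw_upd)
  also have "\<dots> = (\<Sum>g\<in>PiE {..n} (\<lambda>_. UNIV). \<Sum>a\<in>UNIV. (if g n = a then Tw Q \<nu> \<phi> n g else 0) * of_real (Q a b) * \<phi> (Suc n) b)"
    by (intro sum.cong refl) (simp add: sum_if_delta mult.assoc)
  also have "\<dots> = (\<Sum>a\<in>UNIV. Fv Q \<nu> \<phi> n a * of_real (Q a b) * \<phi> (Suc n) b)"
    unfolding Suc.IH by (subst sum.swap) (simp add: sum_distrib_right)
  also have "\<dots> = Fv Q \<nu> \<phi> (Suc n) b"
    by (simp add: qstep_def sum_distrib_left sum_distrib_right algebra_simps)
  finally show ?case by simp
qed

lemma Fv_total:
  fixes Q :: "'a::finite \<Rightarrow> 'a \<Rightarrow> real"
  shows "(\<Sum>w\<in>PiE {..n} (\<lambda>_. UNIV). Tw Q \<nu> \<phi> n w) = (\<Sum>b\<in>UNIV. Fv Q \<nu> \<phi> n b)"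
  unfolding Fv_eq by (subst sum.swap) simp



definition cnt :: "(nat \<Rightarrow> 'a \<Rightarrow> complex) \<Rightarrow> nat \<Rightarrow> nat" where
  "cnt \<phi> n = card {j \<in> {1..<n}. \<phi> j \<noteq> (\<lambda>_. 1)}"

lemma cnt_Suc: "cnt \<phi> (Suc n) = cnt \<phi> n + (if 1 \<le> n \<and> \<phi> n \<noteq> (\<lambda>_. 1) then 1 else 0)"
proof (cases "1 \<le> n \<and> \<phi> n \<noteq> (\<lambda>_. 1)")
  case True
  hence "{j \<in> {1..<Suc n}. \<phi> j \<noteq> (\<lambda>_. 1)} = insert n {j \<in> {1..<n}. \<phi> j \<noteq> (\<lambda>_. 1)}" by auto
  thus ?thesis using True unfolding cnt_def by simp
next
  case False
  hence "{j \<in> {1..<Suc n}. \<phi> j \<noteq> (\<lambda>_. 1)} = {j \<in> {1..<n}. \<phi> j \<noteq> (\<lambda>_. 1)}" by (auto simp: less_Suc_eq)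
  thus ?thesis using False unfolding cnt_def by simp
qed

lemma cnt_01: "cnt \<phi> 0 = 0" "cnt \<phi> (Suc 0) = 0" unfolding cnt_def by auto

lemma Fv_bound:
  fixes Q :: "'a::{finite,ab_group_add} \<Rightarrow> 'a \<Rightarrow> real"
  assumes st: "stochastic_matrix Q" and sv: "stationary_vector Q \<nu>"
    and dl: "\<And>a b. \<delta> \<le> Q a b" and d0: "0 \<le> \<delta>" and ch: "\<And>j. is_character (\<phi> j)"
  shows "nrm (Fv Q \<nu> \<phi> n) \<le> (1 - (real CARD('a) * \<delta>)^2) ^ (cnt \<phi> n div 2)"
proof -
  define \<rho> where "\<rho> = 1 - (real CARD('a) * \<delta>)^2"
  have "(\<Sum>b\<in>(UNIV::'a set). \<delta>) \<le> (\<Sum>b\<in>UNIV. Q undefined b)" by (rule sum_mono) (rule dl)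
  hence Nd: "real CARD('a) * \<delta> \<le> 1" using st unfolding stochastic_matrix_def by simp
  have r0: "0 \<le> \<rho>" unfolding \<rho>_def using Nd d0
    by (metis abs_of_nonneg diff_ge_0_iff_ge mult_nonneg_nonneg of_nat_0_le_iff one_power2 power2_le_iff_abs_le zero_le_one)
  have r1: "\<rho> \<le> 1" unfolding \<rho>_def by simp
  have phn: "cmod (\<phi> j b) \<le> 1" for j b by (rule char_norm_le[OF ch])
  have F0: "nrm (Fv Q \<nu> \<phi> 0) \<le> 1"
  proof -
    have "nrm (Fv Q \<nu> \<phi> 0) = (\<Sum>b\<in>UNIV. \<nu> b * cmod (\<phi> 0 b))"
      unfolding nrm_def using sv unfolding stationary_vector_def by (simp add: norm_mult)
    also have "\<dots> \<le> (\<Sum>b\<in>UNIV. \<nu> b)"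
      using sv unfolding stationary_vector_def by (intro sum_mono mult_right_le_one_le phn) auto
    also have "\<dots> = 1" using sv unfolding stationary_vector_def by simp
    finally show ?thesis .
  qed
  show ?thesis unfolding \<rho>_def[symmetric]
  proof (induction n rule: less_induct)
    case (less n)
    show ?case
    proof (cases n)
      case 0
      thus ?thesis using F0 by (simp add: cnt_01)
    next
      case (Suc k)
      note k = Suc
      show ?thesis
      proof (cases k)
        case 0
        have "nrm (Fv Q \<nu> \<phi> 1) \<le> nrm (Fv Q \<nu> \<phi> 0)" by (simp add: qstep_le[OF st phn])
        thus ?thesis using F0 k 0 by (simp add: cnt_01)
      next
        case (Suc j)
        hence n: "n = Suc (Suc j)" using k by simp
        show ?thesis
        proof (cases "\<phi> (Suc j) = (\<lambda>_. 1)")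
          case True
          have "nrm (Fv Q \<nu> \<phi> n) \<le> nrm (Fv Q \<nu> \<phi> (Suc j))" unfolding n by (simp add: qstep_le[OF st phn])
          also have "\<dots> \<le> \<rho> ^ (cnt \<phi> (Suc j) div 2)" using less.IH[of "Suc j"] n by simp
          also have "cnt \<phi> (Suc j) = cnt \<phi> n" unfolding n cnt_Suc[of _ "Suc j"] using True by simp
          finally show ?thesis .
        next
          case False
          have "nrm (Fv Q \<nu> \<phi> n) \<le> \<rho> * nrm (Fv Q \<nu> \<phi> j)" unfolding n \<rho>_def
            by (simp add: qstep_contract[OF st dl d0 ch False phn])
          also have "\<dots> \<le> \<rho> * \<rho> ^ (cnt \<phi> j div 2)" using less.IH[of j] n r0 by (intro mult_left_mono) auto
          also have "\<dots> = \<rho> ^ (cnt \<phi> j div 2 + 1)" by simp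
          also have "\<dots> \<le> \<rho> ^ (cnt \<phi> n div 2)"
          proof (rule power_decreasing[OF _ r0 r1])
            have "cnt \<phi> n \<le> cnt \<phi> j + 2" unfolding n cnt_Suc by simp
            thus "cnt \<phi> n div 2 \<le> cnt \<phi> j div 2 + 1" by linarith
          qed
          finally show ?thesis .
        qed
      qed
    qed
  qed
qed



lemma cyl_sets:
  fixes \<mu> :: "(int \<Rightarrow> 'a) measure"
  assumes "sets \<mu> = sets shift_space"
  shows "{c \<in> space \<mu>. \<forall>i\<le>L. c (m + int i) = w i} \<in> sets \<mu>"
proof -
  have sp: "space \<mu> = space shift_space" using sets_eq_imp_space_eq[OF assms] .
  have "Measurable.pred shift_space (\<lambda>c. \<forall>i\<le>L. c (m + int i) = w i)"
    unfolding shift_space_def by measurable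
  hence "{c \<in> space shift_space. \<forall>i\<le>L. c (m + int i) = w i} \<in> sets shift_space" by (rule predE)
  thus ?thesis unfolding sp assms .
qed

lemma integral_cyl:
  fixes Q :: "'a::finite \<Rightarrow> 'a \<Rightarrow> real"
  assumes smm: "stationary_markov_measure Q \<nu> \<mu>"
  shows "integral\<^sup>L \<mu> (\<lambda>c. \<Prod>j\<le>L. \<phi> j (c (m + int j))) = (\<Sum>w\<in>PiE {..L} (\<lambda>_. UNIV). Tw Q \<nu> \<phi> L w)"
proof -
  define P where "P = PiE {..L} (\<lambda>_. UNIV::'a set)"
  define cyl where "cyl w = {c \<in> space \<mu>. \<forall>i\<le>L. c (m + int i) = w i}" for w
  have ps: "prob_space \<mu>" and se: "sets \<mu> = sets shift_space"
    and mc: "\<And>w. measure \<mu> (cyl w) = \<nu> (w 0) * (\<Prod>i<L. Q (w i) (w (Suc i)))"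
    using smm unfolding stationary_markov_measure_def cyl_def by auto
  have cs: "cyl w \<in> sets \<mu>" for w unfolding cyl_def by (rule cyl_sets[OF se])
  have fin: "finite P" unfolding P_def by (simp add: finite_PiE)
  have pw: "(\<Prod>j\<le>L. \<phi> j (c (m + int j))) = (\<Sum>w\<in>P. (\<Prod>j\<le>L. \<phi> j (w j)) * of_real (indicator (cyl w) c))"
    if c: "c \<in> space \<mu>" for c
  proof -
    define wc where "wc = restrict (\<lambda>i. c (m + int i)) {..L}"
    have wcP: "wc \<in> P" unfolding wc_def P_def by simp
    have iff: "c \<in> cyl w \<longleftrightarrow> w = wc" if "w \<in> P" for w
      using that c unfolding cyl_def wc_def P_def
      by (auto simp: fun_eq_iff PiE_iff extensional_def)
    have "(\<Sum>w\<in>P. (\<Prod>j\<le>L. \<phi> j (w j)) * of_real (indicator (cyl w) c))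
        = (\<Sum>w\<in>P. if w = wc then (\<Prod>j\<le>L. \<phi> j (w j)) else 0)"
      by (intro sum.cong refl) (simp add: iff indicator_def)
    also have "\<dots> = (\<Prod>j\<le>L. \<phi> j (wc j))" using fin wcP by simp
    also have "\<dots> = (\<Prod>j\<le>L. \<phi> j (c (m + int j)))" unfolding wc_def by (intro prod.cong) auto
    finally show ?thesis by simp
  qed
  interpret prob_space \<mu> by (rule ps)
  have ii: "integrable \<mu> (indicator (cyl w) :: _ \<Rightarrow> real)" for w
    by (rule integrable_real_indicator[OF cs]) (simp add: less_top[symmetric])
  have ii2: "integrable \<mu> (\<lambda>c. K * complex_of_real (indicator (cyl w) c))" for K w
  proof -
    have "integrable \<mu> (\<lambda>c. complex_of_real (indicator (cyl w) c))"
      by (rule integrable_of_real[OF ii])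
    thus ?thesis by (rule integrable_mult_right)
  qed
  have "integral\<^sup>L \<mu> (\<lambda>c. \<Prod>j\<le>L. \<phi> j (c (m + int j)))
      = integral\<^sup>L \<mu> (\<lambda>c. \<Sum>w\<in>P. (\<Prod>j\<le>L. \<phi> j (w j)) * of_real (indicator (cyl w) c))"
    by (intro Bochner_Integration.integral_cong refl pw)
  also have "\<dots> = (\<Sum>w\<in>P. integral\<^sup>L \<mu> (\<lambda>c. (\<Prod>j\<le>L. \<phi> j (w j)) * of_real (indicator (cyl w) c)))"
    by (rule Bochner_Integration.integral_sum) (rule ii2)
  also have "\<dots> = (\<Sum>w\<in>P. (\<Prod>j\<le>L. \<phi> j (w j)) * of_real (measure \<mu> (cyl w)))"
  proof (rule sum.cong[OF refl])
    fix w
    have sub: "cyl w \<inter> space \<mu> = cyl w" unfolding cyl_def by blast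
    have "integral\<^sup>L \<mu> (\<lambda>c. complex_of_real (indicator (cyl w) c)) = of_real (measure \<mu> (cyl w))"
      unfolding integral_complex_of_real by (simp add: sub)
    then show "integral\<^sup>L \<mu> (\<lambda>c. (\<Prod>j\<le>L. \<phi> j (w j)) * of_real (indicator (cyl w) c)) = (\<Prod>j\<le>L. \<phi> j (w j)) * of_real (measure \<mu> (cyl w))"
      unfolding integral_mult_right_zero by (rule arg_cong)
  qed
  also have "\<dots> = (\<Sum>w\<in>P. Tw Q \<nu> \<phi> L w)"
    unfolding mc Tw_def by (intro sum.cong refl) (rule mult.commute)
  finally show ?thesis unfolding P_def .
qed



theorem mainTheorem6:
  fixes Q :: "'a::{finite, ab_group_add} \<Rightarrow> 'a \<Rightarrow> real"
    and \<nu> :: "'a \<Rightarrow> real"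
    and \<mu> :: "(int \<Rightarrow> 'a) measure"
  assumes "stationary_markov_measure Q \<nu> \<mu>"
    and "\<forall>a b. Q a b \<noteq> 0"
  shows "harmonically_mixing \<mu>"
proof -
  have st: "stochastic_matrix Q" and sv: "stationary_vector Q \<nu>"
    using assms(1) unfolding stationary_markov_measure_def by auto
  have Qpos: "Q a b > 0" for a b using st assms(2) unfolding stochastic_matrix_def
    by (metis less_eq_real_def)
  define \<delta> where "\<delta> = Min (range (\<lambda>p::'a \<times> 'a. Q (fst p) (snd p)))"
  have finr: "finite (range (\<lambda>p::'a \<times> 'a. Q (fst p) (snd p)))" by simp
  have dl: "\<delta> \<le> Q a b" for a b unfolding \<delta>_def
    by (rule Min_le[OF finr]) (rule range_eqI[of _ _ "(a, b)"], simp)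
  have "\<delta> \<in> range (\<lambda>p::'a \<times> 'a. Q (fst p) (snd p))" unfolding \<delta>_def by (rule Min_in[OF finr]) auto
  hence dpos: "\<delta> > 0" using Qpos by auto
  define N where "N = real CARD('a)"
  define \<rho> where "\<rho> = 1 - (N * \<delta>)^2"
  have "(\<Sum>b\<in>(UNIV::'a set). \<delta>) \<le> (\<Sum>b\<in>UNIV. Q undefined b)" by (rule sum_mono) (rule dl)
  hence Nd: "N * \<delta> \<le> 1" using st unfolding stochastic_matrix_def N_def by simp
  have Npos: "N > 0" unfolding N_def by simp
  have r0: "0 \<le> \<rho>" unfolding \<rho>_def using Nd dpos Npos
    by (metis abs_of_nonneg diff_ge_0_iff_ge less_eq_real_def mult_nonneg_nonneg one_power2 power2_le_iff_abs_le zero_le_one)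
  have r1: "\<rho> < 1" unfolding \<rho>_def using dpos Npos by simp
  show ?thesis unfolding harmonically_mixing_def
  proof (intro allI impI)
    fix \<epsilon> :: real assume eps: "\<epsilon> > 0"
    obtain n where n: "\<rho> ^ n < \<epsilon>" using real_arch_pow_inv[OF eps r1] by blast
    show "\<exists>R. \<forall>X. is_seq_character X \<and> R < char_rank X \<longrightarrow> cmod (integral\<^sup>L \<mu> (seq_char_fun X)) < \<epsilon>"
    proof (intro exI[of _ "2 * n"] allI impI)
      fix X :: "int \<Rightarrow> 'a \<Rightarrow> complex"
      assume X: "is_seq_character X \<and> 2 * n < char_rank X"
      define S where "S = char_support X"
      have finS: "finite S" and chX: "\<And>k. is_character (X k)" using X unfolding is_seq_character_def S_def by auto
      have cardS: "2 * n < card S" using X unfolding char_rank_def S_def by simp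
      hence Sne: "S \<noteq> {}" by auto
      have off: "X k = (\<lambda>_. 1)" if "k \<notin> S" for k using that unfolding S_def char_support_def by auto
      define m where "m = Min S - 1"
      define L where "L = nat (Max S - Min S + 2)"
      define g where "g j = m + int j" for j
      define \<phi> where "\<phi> j = X (g j)" for j
      have MinS: "Min S \<le> k" "k \<le> Max S" if "k \<in> S" for k using finS that by auto
      have ginj: "inj g" unfolding g_def inj_def by auto
      have inS: "nat (k - m) \<in> {1..<L} \<and> g (nat (k - m)) = k" if "k \<in> S" for k
        using MinS[OF that] unfolding m_def L_def g_def by auto
      have Ssub: "S \<subseteq> g ` {..L}"
      proof
        fix k assume "k \<in> S"
        thus "k \<in> g ` {..L}" using inS[of k] by (metis atLeastLessThan_iff imageI atMost_iff less_imp_le)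
      qed
      have feq: "seq_char_fun X = (\<lambda>c. \<Prod>j\<le>L. \<phi> j (c (m + int j)))"
      proof
        fix c :: "int \<Rightarrow> 'a"
        have "seq_char_fun X c = (\<Prod>k\<in>g ` {..L}. X k (c k))"
          unfolding seq_char_fun_def S_def[symmetric]
          by (rule prod.mono_neutral_left) (use Ssub off in auto)
        also have "\<dots> = (\<Prod>j\<le>L. X (g j) (c (g j)))"
          by (subst prod.reindex) (use ginj in \<open>auto simp: inj_on_def inj_def\<close>)
        finally show "seq_char_fun X c = (\<Prod>j\<le>L. \<phi> j (c (m + int j)))" unfolding \<phi>_def g_def .
      qed
      have cntS: "cnt \<phi> L = card S"
      proof -
        have "g ` {j \<in> {1..<L}. \<phi> j \<noteq> (\<lambda>_. 1)} = S"
        proof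
          show "g ` {j \<in> {1..<L}. \<phi> j \<noteq> (\<lambda>_. 1)} \<subseteq> S" unfolding \<phi>_def using off by auto
          show "S \<subseteq> g ` {j \<in> {1..<L}. \<phi> j \<noteq> (\<lambda>_. 1)}"
          proof
            fix k assume k: "k \<in> S"
            have "X k \<noteq> (\<lambda>_. 1)" using k unfolding S_def char_support_def by auto
            hence "nat (k - m) \<in> {j \<in> {1..<L}. \<phi> j \<noteq> (\<lambda>_. 1)}" using inS[OF k] unfolding \<phi>_def by auto
            thus "k \<in> g ` {j \<in> {1..<L}. \<phi> j \<noteq> (\<lambda>_. 1)}" by (rule rev_image_eqI) (use inS[OF k] in simp)
          qed
        qed
        moreover have "card (g ` {j \<in> {1..<L}. \<phi> j \<noteq> (\<lambda>_. 1)}) = card {j \<in> {1..<L}. \<phi> j \<noteq> (\<lambda>_. 1)}"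
          by (rule card_image) (rule inj_on_subset[OF ginj], simp)
        ultimately have "card S = card {j \<in> {1..<L}. \<phi> j \<noteq> (\<lambda>_. 1)}" by simp
        thus ?thesis unfolding cnt_def by simp
      qed
      have chphi: "is_character (\<phi> j)" for j unfolding \<phi>_def by (rule chX)
      have "cmod (integral\<^sup>L \<mu> (seq_char_fun X)) = cmod (\<Sum>b\<in>UNIV. Fv Q \<nu> \<phi> L b)"
        unfolding feq integral_cyl[OF assms(1)] Fv_total ..
      also have "\<dots> \<le> nrm (Fv Q \<nu> \<phi> L)" unfolding nrm_def by (rule norm_sum)
      also have "\<dots> \<le> \<rho> ^ (cnt \<phi> L div 2)" unfolding \<rho>_def N_def
        by (rule Fv_bound[OF st sv dl less_imp_le[OF dpos] chphi])
      also have "\<dots> \<le> \<rho> ^ n"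
        by (rule power_decreasing) (use cntS cardS r0 r1 in auto)
      also have "\<dots> < \<epsilon>" by (rule n)
      finally show "cmod (integral\<^sup>L \<mu> (seq_char_fun X)) < \<epsilon>" .
    qed
  qed
qed

end
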